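(* Let $I,J\in\mathbb Z$ with $4I^3\ne J^2$, and let \[ g(a,c,d)=(I-12d+3ac)(96d+3ac-2I)^2-(J+27c^2+27a^2d)^2 . \] Then the affine surface $Y_{I,J}\subset\mathbb A^3$ defined by $g(a,c,d)=0$ is absolutely irreducible. *)

theory Defs
  imports Complex_Main "HOL-Computational_Algebra.Polynomial_Factorial"
begin

text \<open>The trivariate polynomial ring C[a,c,d] is modelled as the nested
  univariate ring ((C[d])[c])[a], i.e. type complex poly poly poly.\<close>

type_synonym cpoly3 = "complex poly poly poly"

definition var_a :: cpoly3 where "var_a = [:0, 1:]"
definition var_c :: cpoly3 where "var_c = [:[:0, 1:]:]"
definition var_d :: cpoly3 where "var_d = [:[:[:0, 1:]:]:]"

definition g_poly :: "int \<Rightarrow> int \<Rightarrow> cpoly3" where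
  "g_poly I J =
     (of_int I - 12 * var_d + 3 * var_a * var_c)
       * (96 * var_d + 3 * var_a * var_c - 2 * of_int I) ^ 2
     - (of_int J + 27 * var_c ^ 2 + 27 * var_a ^ 2 * var_d) ^ 2"

end

theory Submission imports Defs begin

definition rhom :: "('a::comm_ring_1 \<Rightarrow> 'b::comm_ring_1) \<Rightarrow> bool" where
  "rhom f \<longleftrightarrow> (\<forall>x y. f (x+y) = f x + f y) \<and> (\<forall>x y. f (x*y) = f x * f y) \<and> f 1 = 1"

lemma rhom_add: "rhom f \<Longrightarrow> f (x+y) = f x + f y" by (simp add: rhom_def)
lemma rhom_mult: "rhom f \<Longrightarrow> f (x*y) = f x * f y" by (simp add: rhom_def)
lemma rhom_one: "rhom f \<Longrightarrow> f 1 = 1" by (simp add: rhom_def)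
lemma rhom_zero: assumes h: "rhom f" shows "f 0 = 0"
proof -
  have "f (0 + 0) = f 0 + f 0" by (rule rhom_add[OF h])
  then have "f 0 = f 0 + f 0" by (simp only: add_0_left)
  then show ?thesis by (metis add_cancel_right_right)
qed
lemma rhom_uminus: assumes h: "rhom f" shows "f (- x) = - f x"
proof -
  have "f x + f (- x) = f (x + - x)" by (rule rhom_add[OF h, symmetric])
  also have "\<dots> = 0" by (simp only: right_minus rhom_zero[OF h])
  finally have "f x + f (- x) = 0" .
  then show ?thesis by (metis neg_eq_iff_add_eq_0)
qed
lemma rhom_diff: assumes h: "rhom f" shows "f (x - y) = f x - f y"
  using rhom_add[OF h, of x "-y"] rhom_uminus[OF h, of y] by (simp only: diff_conv_add_uminus)
lemma rhom_power: assumes h: "rhom f" shows "f (x ^ n) = f x ^ n"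
  by (induction n) (simp_all add: rhom_mult[OF h] rhom_one[OF h])
lemma rhom_of_nat: assumes h: "rhom f" shows "f (of_nat n) = of_nat n"
  by (induction n) (simp_all add: rhom_add[OF h] rhom_one[OF h] rhom_zero[OF h])
lemma rhom_numeral: assumes h: "rhom f" shows "f (numeral n) = numeral n"
  using rhom_of_nat[OF h, of "numeral n"] by simp
lemma rhom_of_int: assumes h: "rhom f" shows "f (of_int z) = of_int z"
  by (cases z) (simp_all add: rhom_of_nat[OF h] rhom_uminus[OF h] del: of_nat_Suc)

lemmas rh = rhom_add rhom_mult rhom_one rhom_zero rhom_uminus rhom_diff rhom_power
  rhom_of_nat rhom_numeral rhom_of_int

lemma map_poly_pCons0: "f 0 = 0 \<Longrightarrow> map_poly f (pCons c p) = pCons (f c) (map_poly f p)"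
  by (rule map_poly_pCons)

lemma rhom_map_poly_add: assumes h: "rhom f" shows "map_poly f (p+q) = map_poly f p + map_poly f q"
  by (simp add: poly_eq_iff coeff_map_poly rh[OF h])
lemma rhom_map_poly_smult: assumes h: "rhom f" shows "map_poly f (smult a q) = smult (f a) (map_poly f q)"
  by (simp add: poly_eq_iff coeff_map_poly rh[OF h])
lemma rhom_map_poly_mult: assumes h: "rhom f" shows "map_poly f (p*q) = map_poly f p * map_poly f q"
proof (induction p)
  case 0 then show ?case by (simp add: rh[OF h])
next
  case (pCons a p)
  have "map_poly f (pCons a p * q) = map_poly f (smult a q + pCons 0 (p*q))" by simp
  also have "\<dots> = smult (f a) (map_poly f q) + pCons 0 (map_poly f p * map_poly f q)"
    using pCons by (simp add: rhom_map_poly_add[OF h] rhom_map_poly_smult[OF h] map_poly_pCons0 rh[OF h])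
  also have "\<dots> = map_poly f (pCons a p) * map_poly f q"
    using pCons by (simp add: map_poly_pCons0 rh[OF h])
  finally show ?case .
qed

lemma rhom_eval: assumes h: "rhom f" shows "rhom (\<lambda>p. poly (map_poly f p) x)"
  unfolding rhom_def[of "\<lambda>p. poly (map_poly f p) x"]
  by (simp add: rhom_map_poly_add[OF h] rhom_map_poly_mult[OF h] rh[OF h] one_pCons map_poly_pCons0)

lemma rhom_comm: assumes h: "rhom h" and f: "rhom f" shows
   "h (poly (map_poly f p) x) = poly (map_poly (h \<circ> f) p) (h x)"
  by (induction p) (simp_all add: map_poly_pCons0 rh[OF h] rh[OF f])

definition C3 :: "complex \<Rightarrow> cpoly3" where "C3 c = [:[:[:c:]:]:]"

lemma rhom_C3: "rhom C3"
  unfolding rhom_def C3_def by (simp add: one_pCons)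

definition ev3 :: "cpoly3 \<Rightarrow> cpoly3 \<Rightarrow> cpoly3 \<Rightarrow> cpoly3 \<Rightarrow> cpoly3" where
  "ev3 x y z p = poly (map_poly (\<lambda>q. poly (map_poly (\<lambda>r. poly (map_poly C3 r) z) q) y) p) x"

lemma rhom_ev3: "rhom (ev3 x y z)"
  unfolding ev3_def by (intro rhom_eval rhom_C3)

lemma ev3_comm: assumes h: "rhom h" and hc: "\<And>c. h (C3 c) = C3 c"
  shows "h (ev3 x y z p) = ev3 (h x) (h y) (h z) p"
proof -
  have r1: "rhom (\<lambda>r. poly (map_poly C3 r) z)" by (intro rhom_eval rhom_C3)
  have r2: "rhom (\<lambda>q. poly (map_poly (\<lambda>r. poly (map_poly C3 r) z) q) y)" by (intro rhom_eval rhom_C3)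
  have e1: "h \<circ> C3 = C3" using hc by auto
  have e2: "h \<circ> (\<lambda>r. poly (map_poly C3 r) z) = (\<lambda>r. poly (map_poly C3 r) (h z))"
    by (rule ext) (simp add: rhom_comm[OF h rhom_C3] e1)
  have e3: "h \<circ> (\<lambda>q. poly (map_poly (\<lambda>r. poly (map_poly C3 r) z) q) y)
      = (\<lambda>q. poly (map_poly (\<lambda>r. poly (map_poly C3 r) (h z)) q) (h y))"
    by (rule ext) (simp add: rhom_comm[OF h r1] e2)
  show ?thesis unfolding ev3_def
    by (simp add: rhom_comm[OF h r2] e3)
qed

lemma ev3_id: "ev3 var_a var_c var_d p = p"
proof -
  have l1: "poly (map_poly C3 r) var_d = [:[:r:]:]" for r
    by (induction r) (simp_all add: map_poly_pCons0 C3_def var_d_def)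
  have l2: "poly (map_poly (\<lambda>r. [:[:r:]:]) q) var_c = [:q:]" for q
    by (induction q) (simp_all add: map_poly_pCons0 var_c_def)
  have l3: "poly (map_poly (\<lambda>q. [:q:]) p) var_a = p"
    by (induction p) (simp_all add: map_poly_pCons0 var_a_def)
  show ?thesis unfolding ev3_def l1 l2 l3 ..
qed

definition sw :: "cpoly3 \<Rightarrow> cpoly3" where "sw = ev3 var_d var_c var_a"

lemma rhom_sw: "rhom sw" unfolding sw_def by (rule rhom_ev3)
lemma sw_C3[simp]: "sw (C3 c) = C3 c" by (simp add: sw_def ev3_def C3_def map_poly_pCons0)
lemma sw_a[simp]: "sw var_a = var_d" by (simp add: sw_def ev3_def var_a_def var_d_def map_poly_pCons0 map_poly_1 one_pCons C3_def)
lemma sw_c[simp]: "sw var_c = var_c" by (simp add: sw_def ev3_def var_c_def var_d_def C3_def map_poly_pCons0 map_poly_1 one_pCons)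
lemma sw_d[simp]: "sw var_d = var_a" by (simp add: sw_def ev3_def var_a_def var_d_def C3_def map_poly_pCons0 map_poly_1 one_pCons)

lemma sw_sw[simp]: "sw (sw p) = p"
proof -
  have "sw (sw p) = ev3 (sw var_d) (sw var_c) (sw var_a) p"
    unfolding sw_def[of] by (metis ev3_comm rhom_sw sw_C3 sw_def)
  then show ?thesis by (simp add: ev3_id)
qed

lemma cadd: "[:x + y:] = [:x:] + [:y:]" by simp
lemma cmult: "[:x * y:] = [:x:] * [:y:]" by (simp add: mult.commute)
lemma cdiff: "[:x - y:] = [:x:] - [:y:]" by simp
lemma cpow: "[:(x::'a::comm_ring_1) ^ n:] = [:x:] ^ n"
proof (induction n)
  case 0 show ?case by (simp add: one_pCons)
next
  case (Suc n)
  have "[:x ^ Suc n:] = [:x:] * [:x ^ n:]" by (simp only: power_Suc cmult)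
  then show ?case using Suc by simp
qed
lemma cnum: "[:numeral n:] = numeral n" by (simp add: numeral_poly)
lemma cint: "[:of_int z:] = of_int z" by (simp add: of_int_poly)
lemma cneg: "[:- x:] = - [:x:]" by simp
lemma pc: "pCons (a::'a::comm_ring_1) p = [:a:] + [:0,1:] * p" by simp

definition e0 :: "int \<Rightarrow> int \<Rightarrow> 'a::comm_ring_1 \<Rightarrow> 'a \<Rightarrow> 'a" where
  "e0 I J a c = (of_int I + 3*a*c) * (3*a*c - 2*of_int I)^2 - (of_int J + 27*c^2)^2"
definition e1 :: "int \<Rightarrow> int \<Rightarrow> 'a::comm_ring_1 \<Rightarrow> 'a \<Rightarrow> 'a" where
  "e1 I J a c = 192 * (of_int I + 3*a*c) * (3*a*c - 2*of_int I) - 12 * (3*a*c - 2*of_int I)^2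
     - 54 * (of_int J + 27*c^2) * a^2"
definition e2 :: "int \<Rightarrow> int \<Rightarrow> 'a::comm_ring_1 \<Rightarrow> 'a \<Rightarrow> 'a" where
  "e2 I J a c = 9216 * (of_int I + 3*a*c) - 2304 * (3*a*c - 2*of_int I) - 729 * a^4"

lemma e_hom: assumes h: "rhom h" shows "h (e0 I J a c) = e0 I J (h a) (h c)"
  "h (e1 I J a c) = e1 I J (h a) (h c)"
  "h (e2 I J a c) = e2 I J (h a) (h c)"
  unfolding e0_def e1_def e2_def by (simp_all add: rh[OF h])

lemma gen: fixes X a c :: "'a::comm_ring_1"
  shows "(of_int I - 12 * X + 3*a*c) * (96*X + 3*a*c - 2*of_int I)^2
     - (of_int J + 27*c^2 + 27*a^2*X)^2
   = e0 I J a c + X * (e1 I J a c + X * (e2 I J a c + X * (-110592)))"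
  unfolding e0_def e1_def e2_def by (simp add: algebra_simps power2_eq_square power4_eq_xxxx)

lemma rhom_const: "rhom (\<lambda>x::'a::comm_ring_1. [:x:])"
  unfolding rhom_def by (simp add: one_pCons mult.commute)

lemma expand:
  fixes a c :: "'a::comm_ring_1"
  shows "(of_int I - 12 * [:0,1:] + 3*[:a:]*[:c:]) * (96*[:0,1:] + 3*[:a:]*[:c:] - 2*of_int I)^2
     - (of_int J + 27*[:c:]^2 + 27*[:a:]^2*[:0,1:])^2
   = [:e0 I J a c, e1 I J a c, e2 I J a c, -110592:]"
proof -
  define X :: "'a poly" where "X = [:0,1:]"
  have "[:e0 I J a c, e1 I J a c, e2 I J a c, -110592:] =
     [:e0 I J a c:] + X * ([:e1 I J a c:] + X * ([:e2 I J a c:] + X * [:-110592:]))"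
    unfolding X_def by simp
  also have "\<dots> = e0 I J [:a:] [:c:] + X * (e1 I J [:a:] [:c:] + X * (e2 I J [:a:] [:c:] + X * (-110592)))"
    by (simp only: e_hom[OF rhom_const] cneg cnum)
  also have "\<dots> = (of_int I - 12 * X + 3*[:a:]*[:c:]) * (96*X + 3*[:a:]*[:c:] - 2*of_int I)^2
     - (of_int J + 27*[:c:]^2 + 27*[:a:]^2*X)^2"
    by (rule gen[symmetric])
  finally show ?thesis unfolding X_def by simp
qed

lemma sw_g: "sw (g_poly I J) = [:e0 I J [:[:0,1:]:] [:0,1:], e1 I J [:[:0,1:]:] [:0,1:],
    e2 I J [:[:0,1:]:] [:0,1:], -110592:]"
proof -
  have "sw (g_poly I J) = (of_int I - 12 * var_a + 3 * var_d * var_c) * (96 * var_a + 3 * var_d * var_c - 2 * of_int I) ^ 2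
     - (of_int J + 27 * var_c ^ 2 + 27 * var_d ^ 2 * var_a) ^ 2"
    unfolding g_poly_def by (simp add: rh[OF rhom_sw])
  also have "\<dots> = [:e0 I J [:[:0,1:]:] [:0,1:], e1 I J [:[:0,1:]:] [:0,1:],
    e2 I J [:[:0,1:]:] [:0,1:], -110592:]" unfolding var_a_def var_c_def var_d_def by (rule expand)
  finally show ?thesis .
qed


lemma rhom_unit: assumes h: "rhom f" and u: "is_unit x" shows "is_unit (f x)"
proof -
  obtain y where "1 = x * y" using u by (rule dvdE)
  then have "1 = f x * f y" by (metis rhom_mult[OF h] rhom_one[OF h])
  then show ?thesis by (rule dvdI)
qed

lemma rhom_polyx: "rhom (\<lambda>q. poly q x)" unfolding rhom_def by simp
lemma rhom_mapp: assumes h: "rhom f" shows "rhom (map_poly f)"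
  unfolding rhom_def[of "map_poly f"] by (simp add: rhom_map_poly_add[OF h] rhom_map_poly_mult[OF h] one_pCons map_poly_pCons0 rh[OF h])

definition ev0 :: "complex poly poly \<Rightarrow> complex poly" where "ev0 = map_poly (\<lambda>q. poly q 0)"
lemma rhom_ev0: "rhom ev0" unfolding ev0_def by (intro rhom_mapp rhom_polyx)

lemma ev0_e: assumes h: "rhom h" shows "h (e0 I J a c) = e0 I J (h a) (h c)"
  "h (e1 I J a c) = e1 I J (h a) (h c)"
  "h (e2 I J a c) = e2 I J (h a) (h c)"
  unfolding e0_def e1_def e2_def by (simp_all add: rh[OF h])

lemma at0: fixes s c :: "'a::comm_ring_1"
  shows "e0 I J 0 c + s * (e1 I J 0 c + s * (e2 I J 0 c + s * (-110592)))
    = (of_int I - 12 * s) * (96 * s - 2 * of_int I)^2 - (of_int J + 27 * c^2)^2"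
  unfolding e0_def e1_def e2_def by (simp add: algebra_simps power2_eq_square)

lemma deg_aff: fixes s :: "complex poly" assumes "m \<noteq> 0"
  shows "degree ([:c:] + smult m s) = degree s"
proof (cases "degree s = 0")
  case True
  have "degree ([:c:] + smult m s) \<le> max (degree [:c:]) (degree (smult m s))" by (rule degree_add_le_max)
  then show ?thesis using True assms by simp
next
  case False
  then show ?thesis using assms by (subst degree_add_eq_right) auto
qed

lemma Kpoly: "(of_int J + 27 * [:0,1:]^2 :: complex poly) = [:of_int J, 0, 27:]"
proof -
  have "[:of_int J, 0, 27:] = [:of_int J:] + [:0,1:] * ([:0:] + [:0,1:] * [:27::complex:])"
    by simp
  also have "\<dots> = of_int J + 27 * [:0,1:]^2" by (simp add: cint cnum power2_eq_square)
  finally show ?thesis by simp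
qed

lemma no_root: "poly (sw (g_poly I J)) r \<noteq> 0"
proof
  assume h: "poly (sw (g_poly I J)) r = 0"
  define s where "s = ev0 r"
  define x :: "complex poly" where "x = [:0,1:]"
  have a0: "ev0 [:[:0,1:]:] = 0" by (simp add: ev0_def map_poly_pCons0)
  have c0: "ev0 [:0,1:] = x" by (simp add: ev0_def x_def map_poly_pCons0)
  have "ev0 (poly (sw (g_poly I J)) r) = 0" using h by (simp add: rh[OF rhom_ev0])
  then have "e0 I J 0 x + s * (e1 I J 0 x + s * (e2 I J 0 x + s * (-110592))) = 0"
    unfolding sw_g by (simp add: ev0_e[OF rhom_ev0] a0 c0 s_def rh[OF rhom_ev0] map_poly_pCons0 ev0_def[symmetric])
  then have eq: "(of_int I - 12 * s) * (96 * s - 2 * of_int I)^2 = [:of_int J, 0, 27:]^2"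
    unfolding at0 x_def Kpoly by simp
  have dK: "degree ([:of_int J, 0, 27:]^2 :: complex poly) = 4"
    by (simp add: degree_power_eq)
  have f1: "of_int I - 12 * s = [:of_int I:] + smult (-12) s"
    by (simp add: of_int_poly numeral_poly)
  have f2: "96 * s - 2 * of_int I = [:-2 * of_int I:] + smult 96 s"
    by (simp add: of_int_poly numeral_poly)
  have d1: "degree (of_int I - 12 * s) = degree s" unfolding f1 by (rule deg_aff) simp
  have d2: "degree (96 * s - 2 * of_int I) = degree s" unfolding f2 by (rule deg_aff) simp
  have nz: "(of_int I - 12 * s) * (96 * s - 2 * of_int I)^2 \<noteq> 0" using eq dK by auto
  then have "of_int I - 12 * s \<noteq> 0" "96 * s - 2 * of_int I \<noteq> 0" by auto
  then have "degree ((of_int I - 12 * s) * (96 * s - 2 * of_int I)^2) = 3 * degree s"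
    by (simp add: degree_mult_eq degree_power_eq d1 d2)
  then have "3 * degree s = 4" using eq dK by simp
  then show False by presburger
qed

lemma deg1_root: fixes P :: "'a::comm_ring_1 poly"
  assumes "degree P = 1" "lead_coeff P dvd 1"
  shows "\<exists>r. poly P r = 0"
proof -
  obtain u where u: "lead_coeff P * u = 1" using assms(2) by (metis dvdE)
  have P: "P = [:coeff P 0, coeff P 1:]"
    using assms(1) by (auto simp: poly_eq_iff coeff_eq_0 coeff_pCons split: nat.split)
  have "poly P (- coeff P 0 * u) = coeff P 0 + (- coeff P 0 * u) * lead_coeff P"
    by (subst P) (simp add: assms(1) mult.commute)
  also have "\<dots> = coeff P 0 - coeff P 0 * (lead_coeff P * u)" by (simp add: algebra_simps)
  also have "\<dots> = 0" using u by simp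
  finally have "poly P (- coeff P 0 * u) = 0" .
  then show ?thesis by blast
qed

theorem lemma6p2:
  fixes I J :: int
  assumes "4 * I ^ 3 \<noteq> J ^ 2"
  shows "irreducible (g_poly I J)"
proof (rule irreducibleI)
  have dG: "degree (sw (g_poly I J)) = 3" unfolding sw_g by simp
  have lG: "lead_coeff (sw (g_poly I J)) = -110592" unfolding sw_g by simp
  show "g_poly I J \<noteq> 0"
  proof
    assume "g_poly I J = 0"
    then have "sw (g_poly I J) = 0" by (simp add: rh[OF rhom_sw])
    then show False using dG by simp
  qed
  show "\<not> g_poly I J dvd 1"
  proof
    assume "g_poly I J dvd 1"
    then have "is_unit (sw (g_poly I J))" by (rule rhom_unit[OF rhom_sw])
    then have "degree (sw (g_poly I J)) = 0" by (auto simp: is_unit_poly_iff)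
    then show False using dG by simp
  qed
  fix p q assume pq: "g_poly I J = p * q"
  define P where "P = sw p"
  define Q where "Q = sw q"
  have G: "sw (g_poly I J) = P * Q" unfolding P_def Q_def pq by (simp add: rh[OF rhom_sw])
  have nz: "P \<noteq> 0" "Q \<noteq> 0" using G dG by auto
  have dPQ: "degree P + degree Q = 3" using G dG nz by (simp add: degree_mult_eq)
  have cu: "is_unit (-110592 :: complex poly poly)"
  proof -
    have "(-110592 :: complex poly poly) = [:[:-110592:]:]"
      by (simp add: numeral_poly)
    moreover have "is_unit [:[:-110592::complex:]:]" by (simp add: is_unit_const_poly_iff dvd_field_iff)
    ultimately show ?thesis by simp
  qed
  have lPQ: "lead_coeff P * lead_coeff Q = -110592" using G lG by (simp add: lead_coeff_mult)
  have uP: "is_unit (lead_coeff P)" using lPQ cu by (metis dvd_triv_left dvd_unit_imp_unit)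
  have uQ: "is_unit (lead_coeff Q)" using lPQ cu by (metis dvd_triv_right dvd_unit_imp_unit)
  have unitc: "is_unit (sw X)" if "degree X = 0" "is_unit (lead_coeff X)" for X
  proof -
    have "X = [:lead_coeff X:]" using that(1) by (metis degree_0_id)
    then have "is_unit X" using that(2) by (metis is_unit_poly_iff)
    then show ?thesis by (rule rhom_unit[OF rhom_sw])
  qed
  have noroot: False if d1: "degree X = 1" and u1: "is_unit (lead_coeff X)" and dv: "X dvd sw (g_poly I J)" for X
  proof -
    obtain r where r: "poly X r = 0" using deg1_root[OF d1 u1] by blast
    obtain Y where "sw (g_poly I J) = X * Y" using dv by (metis dvdE)
    then have "poly (sw (g_poly I J)) r = 0" using r by simp
    then show False using no_root by blast
  qed
  have "degree P = 0 \<or> degree Q = 0 \<or> degree P = 1 \<or> degree Q = 1" using dPQ by arith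
  then show "p dvd 1 \<or> q dvd 1"
  proof (elim disjE)
    assume "degree P = 0" then show ?thesis using unitc[of P] uP P_def by simp
  next
    assume "degree Q = 0" then show ?thesis using unitc[of Q] uQ Q_def by simp
  next
    assume "degree P = 1" then show ?thesis using noroot[of P] uP G by auto
  next
    assume "degree Q = 1" then show ?thesis using noroot[of Q] uQ G by auto
  qed
qed

end
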